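(* Let $P_{Y|X}$ be a channel on finite alphabets and $\psi:\mathbb R_+\to\mathbb R_+$ a convex function with $F_I(t,P_{Y|X})\le t-\psi(t)$ for all $t\ge0$. For a finite-valued $W$ and encoder functions $f_j$, let $P_{Y^n|W}(y^n|w)=\prod_{j=1}^nP_{Y|X}(y_j|f_j(w,y^{j-1}))$. Then for all $t\ge0$, $$F_I(t,P_{Y^n|W})\le t-\psi^{(n)}(t),$$ where $\psi^{(1)}=\psi$ and $\psi^{(k+1)}=\psi^{(k)}\circ\psi$.
   Context: For a channel $P_{B|A}$, $F_I(t,P_{B|A})=\sup\{I(U;B): I(U;A)\le t,\ P_{UAB}=P_{UA}P_{B|A}\}$. *)

theory Defs
  imports "HOL-Analysis.Analysis"
begin

definition mutual_info :: "'u set \<Rightarrow> 'v set \<Rightarrow> ('u \<Rightarrow> 'v \<Rightarrow> real) \<Rightarrow> real" where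
  "mutual_info U V p =
     (\<Sum>u\<in>U. \<Sum>v\<in>V. if p u v = 0 then 0
        else p u v * ln (p u v / ((\<Sum>v'\<in>V. p u v') * (\<Sum>u'\<in>U. p u' v))))"

definition channel :: "'a set \<Rightarrow> 'b set \<Rightarrow> ('a \<Rightarrow> 'b \<Rightarrow> real) \<Rightarrow> bool" where
  "channel A B K \<longleftrightarrow> (\<forall>a\<in>A. (\<forall>b\<in>B. 0 \<le> K a b) \<and> (\<Sum>b\<in>B. K a b) = 1)"

text \<open>F_I(t, K) = sup { I(U;B) : I(U;A) \<le> t, P_UAB = P_UA K }, where U ranges over
  an arbitrary finite alphabet, represented as {..<N} for some N.\<close>
definition F_I :: "'a set \<Rightarrow> 'b set \<Rightarrow> ('a \<Rightarrow> 'b \<Rightarrow> real) \<Rightarrow> real \<Rightarrow> real" where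
  "F_I A B K t = Sup {mutual_info {..<N} B (\<lambda>u b. \<Sum>a\<in>A. p u a * K a b) | (N::nat) p.
      (\<forall>u a. 0 \<le> p u a) \<and> (\<Sum>u<N. \<Sum>a\<in>A. p u a) = 1 \<and> mutual_info {..<N} A p \<le> t}"

text \<open>The n-letter channel with feedback encoders f_{j+1}(w, y^j) (0-indexed j).\<close>
definition feedback_channel ::
  "nat \<Rightarrow> ('x \<Rightarrow> 'y \<Rightarrow> real) \<Rightarrow> (nat \<Rightarrow> 'w \<Rightarrow> 'y list \<Rightarrow> 'x) \<Rightarrow> 'w \<Rightarrow> 'y list \<Rightarrow> real" where
  "feedback_channel n K f w ys = (\<Prod>j<n. K (f j w (take j ys)) (ys ! j))"

end

theory Submission
  imports Defs
begin


lemma mi_cong: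
  assumes "\<And>u v. u \<in> U \<Longrightarrow> v \<in> V \<Longrightarrow> p u v = q u v"
  shows "mutual_info U V p = mutual_info U V q"
  unfolding mutual_info_def using assms by (intro sum.cong refl) (auto intro!: sum.cong)

lemma mi_nonneg:
  assumes "finite U" "finite V" "\<And>u v. u\<in>U \<Longrightarrow> v\<in>V \<Longrightarrow> 0 \<le> p u v"
    "(\<Sum>u\<in>U. \<Sum>v\<in>V. p u v) = 1"
  shows "0 \<le> mutual_info U V p"
proof -
  define a where "a u = (\<Sum>v\<in>V. p u v)" for u
  define b where "b v = (\<Sum>u\<in>U. p u v)" for v
  have tm: "p u v - a u * b v \<le> (if p u v = 0 then 0 else p u v * ln (p u v / (a u * b v)))"
    if uv: "u\<in>U" "v\<in>V" for u v
  proof (cases "p u v = 0")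
    case True
    have "0 \<le> a u" "0 \<le> b v" unfolding a_def b_def using assms uv by (auto intro!: sum_nonneg)
    then show ?thesis using True by simp
  next
    case False
    then have pp: "p u v > 0" using assms uv by force
    have "p u v \<le> a u" unfolding a_def using assms uv by (intro member_le_sum) auto
    moreover have "p u v \<le> b v" unfolding b_def using assms uv by (intro member_le_sum) auto
    ultimately have ab: "a u > 0" "b v > 0" using pp by auto
    have "ln (a u * b v / p u v) \<le> a u * b v / p u v - 1"
      using ab pp by (intro ln_le_minus_one) simp
    moreover have "ln (p u v / (a u * b v)) = - ln (a u * b v / p u v)"
      using ab pp by (simp add: ln_div)
    ultimately have "p u v * ln (p u v / (a u * b v)) \<ge> p u v * (1 - a u * b v / p u v)"
      using pp by (intro mult_left_mono) auto
    also have "p u v * (1 - a u * b v / p u v) = p u v - a u * b v" using pp by (simp add: field_simps)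
    finally show ?thesis using False by simp
  qed
  have "(\<Sum>u\<in>U. \<Sum>v\<in>V. p u v - a u * b v) = 1 - (\<Sum>u\<in>U. a u) * (\<Sum>v\<in>V. b v)"
    by (simp add: sum_subtractf sum_product assms(4))
  also have "(\<Sum>u\<in>U. a u) = 1" using assms(4) by (simp add: a_def)
  also have "(\<Sum>v\<in>V. b v) = 1" using assms(4) unfolding b_def by (subst sum.swap) simp
  finally have "(\<Sum>u\<in>U. \<Sum>v\<in>V. p u v - a u * b v) = 0" by simp
  moreover have "(\<Sum>u\<in>U. \<Sum>v\<in>V. p u v - a u * b v) \<le> mutual_info U V p"
    unfolding mutual_info_def a_def[symmetric] b_def[symmetric]
    using tm by (intro sum_mono) auto
  ultimately show ?thesis by simp
qed

lemma mi_le_card: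
  assumes "finite U" "finite V" "\<And>u v. u\<in>U \<Longrightarrow> v\<in>V \<Longrightarrow> 0 \<le> p u v"
  shows "mutual_info U V p \<le> real (card V)"
proof -
  define a where "a u = (\<Sum>v\<in>V. p u v)" for u
  define b where "b v = (\<Sum>u\<in>U. p u v)" for v
  have tm: "(if p u v = 0 then 0 else p u v * ln (p u v / (a u * b v))) \<le> p u v / b v"
    if uv: "u\<in>U" "v\<in>V" for u v
  proof (cases "p u v = 0")
    case True
    then show ?thesis by simp
  next
    case False
    then have pp: "p u v > 0" using assms uv by force
    have "p u v \<le> a u" unfolding a_def using assms uv by (intro member_le_sum) auto
    moreover have "p u v \<le> b v" unfolding b_def using assms uv by (intro member_le_sum) auto
    ultimately have ab: "a u > 0" "b v > 0" "p u v \<le> a u" using pp by auto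
    have "p u v / (a u * b v) \<le> 1 / b v" using ab pp by (simp add: field_simps)
    then have "ln (p u v / (a u * b v)) \<le> ln (1 / b v)" using ab pp by simp
    also have "\<dots> \<le> 1 / b v - 1" using ab by (intro ln_le_minus_one) simp
    finally have "p u v * ln (p u v / (a u * b v)) \<le> p u v * (1 / b v - 1)"
      using pp by (intro mult_left_mono) auto
    also have "\<dots> \<le> p u v / b v" using pp by (simp add: field_simps)
    finally show ?thesis using False by simp
  qed
  have "mutual_info U V p \<le> (\<Sum>u\<in>U. \<Sum>v\<in>V. p u v / b v)"
    unfolding mutual_info_def a_def[symmetric] b_def[symmetric]
    using tm by (intro sum_mono) auto
  also have "\<dots> = (\<Sum>v\<in>V. (\<Sum>u\<in>U. p u v) / b v)"
    by (subst sum.swap) (simp add: sum_divide_distrib)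
  also have "\<dots> = (\<Sum>v\<in>V. b v / b v)" unfolding b_def ..
  also have "\<dots> \<le> (\<Sum>v\<in>V. 1)" by (intro sum_mono) simp
  finally show ?thesis by simp
qed



lemma sum_pair: "(\<Sum>v\<in>A \<times> B. g v) = (\<Sum>x\<in>A. \<Sum>y\<in>B. g (x, y))"
  by (simp add: sum.cartesian_product)

lemma sum_nonneg_zero:
  fixes f :: "'a \<Rightarrow> real"
  assumes "finite A" "\<And>x. x \<in> A \<Longrightarrow> 0 \<le> f x" "(\<Sum>x\<in>A. f x) = 0" "x \<in> A"
  shows "f x = 0"
  using sum_nonneg_eq_0_iff[of A f, OF assms(1,2)] assms(3,4) by simp

lemma mi_chain:
  fixes p :: "'u \<Rightarrow> 'y \<times> 'z \<Rightarrow> real"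
  assumes fin: "finite U" "finite Y" "finite Z"
    and nn: "\<And>u y z. u\<in>U \<Longrightarrow> y\<in>Y \<Longrightarrow> z\<in>Z \<Longrightarrow> 0 \<le> p u (y,z)"
  shows "mutual_info U (Y \<times> Z) p = mutual_info U Y (\<lambda>u y. \<Sum>z\<in>Z. p u (y,z))
    + (\<Sum>y\<in>Y. (\<Sum>u\<in>U. \<Sum>z\<in>Z. p u (y,z)) *
         mutual_info U Z (\<lambda>u z. p u (y,z) / (\<Sum>u\<in>U. \<Sum>z\<in>Z. p u (y,z))))"
proof -
  define pUY where "pUY u y = (\<Sum>z\<in>Z. p u (y,z))" for u y
  define pU where "pU u = (\<Sum>y\<in>Y. pUY u y)" for u
  define pYZ where "pYZ y z = (\<Sum>u\<in>U. p u (y,z))" for y z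
  define P where "P y = (\<Sum>u\<in>U. pUY u y)" for y
  have P': "(\<Sum>u\<in>U. \<Sum>z\<in>Z. p u (y,z)) = P y" for y by (simp add: P_def pUY_def)
  have nnUY: "0 \<le> pUY u y" if "u\<in>U" "y\<in>Y" for u y
    unfolding pUY_def using nn that by (intro sum_nonneg) auto
  have pos: "p u (y,z) \<le> pUY u y \<and> pUY u y \<le> pU u \<and> pUY u y \<le> P y \<and> p u (y,z) \<le> pYZ y z"
    if "u\<in>U" "y\<in>Y" "z\<in>Z" for u y z
  proof -
    have a: "p u (y,z) \<le> pUY u y" unfolding pUY_def using that nn fin by (intro member_le_sum) auto
    have b: "pUY u y \<le> pU u" unfolding pU_def using that nnUY fin by (intro member_le_sum) auto
    have c: "pUY u y \<le> P y" unfolding P_def using that nnUY fin by (intro member_le_sum) auto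
    have d: "p u (y,z) \<le> pYZ y z" unfolding pYZ_def using that nn fin by (intro member_le_sum) auto
    show ?thesis using a b c d by simp
  qed
  have L: "mutual_info U (Y \<times> Z) p = (\<Sum>u\<in>U. \<Sum>y\<in>Y. \<Sum>z\<in>Z.
      if p u (y,z) = 0 then 0 else p u (y,z) * ln (p u (y,z) / (pU u * pYZ y z)))"
    unfolding mutual_info_def sum_pair pU_def pUY_def pYZ_def ..
  have R1: "mutual_info U Y pUY = (\<Sum>u\<in>U. \<Sum>y\<in>Y. \<Sum>z\<in>Z.
      if p u (y,z) = 0 then 0 else p u (y,z) * ln (pUY u y / (pU u * P y)))"
    unfolding mutual_info_def pU_def[symmetric] P_def[symmetric]
  proof (intro sum.cong refl)
    fix u y assume uy: "u \<in> U" "y \<in> Y"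
    show "(if pUY u y = 0 then 0 else pUY u y * ln (pUY u y / (pU u * P y))) =
      (\<Sum>z\<in>Z. if p u (y,z) = 0 then 0 else p u (y,z) * ln (pUY u y / (pU u * P y)))"
    proof (cases "pUY u y = 0")
      case True
      have "p u (y,z) = 0" if "z\<in>Z" for z
        by (rule sum_nonneg_zero[of Z "\<lambda>z. p u (y,z)", OF fin(3) nn[OF uy] True[unfolded pUY_def] that])
      then show ?thesis using True by simp
    next
      case False
      have "pUY u y * ln (pUY u y / (pU u * P y)) = (\<Sum>z\<in>Z. p u (y,z) * ln (pUY u y / (pU u * P y)))"
        unfolding pUY_def by (simp add: sum_distrib_right)
      also have "\<dots> = (\<Sum>z\<in>Z. if p u (y,z) = 0 then 0 else p u (y,z) * ln (pUY u y / (pU u * P y)))"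
        by (intro sum.cong) auto
      finally show ?thesis using False by simp
    qed
  qed
  have R2: "(\<Sum>y\<in>Y. P y * mutual_info U Z (\<lambda>u z. p u (y,z) / P y)) =
     (\<Sum>y\<in>Y. \<Sum>u\<in>U. \<Sum>z\<in>Z.
      if p u (y,z) = 0 then 0 else p u (y,z) * ln (p u (y,z) * P y / (pUY u y * pYZ y z)))"
  proof (intro sum.cong refl)
    fix y assume y: "y \<in> Y"
    show "P y * mutual_info U Z (\<lambda>u z. p u (y,z) / P y) = (\<Sum>u\<in>U. \<Sum>z\<in>Z.
      if p u (y,z) = 0 then 0 else p u (y,z) * ln (p u (y,z) * P y / (pUY u y * pYZ y z)))"
    proof (cases "P y = 0")
      case True
      have Y0: "pUY u y = 0" if "u\<in>U" for u
        by (rule sum_nonneg_zero[of U "\<lambda>u. pUY u y", OF fin(1) _ True[unfolded P_def] that])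
           (rule nnUY[OF _ y])
      have "p u (y,z) = 0" if "u\<in>U" "z\<in>Z" for u z
        by (rule sum_nonneg_zero[of Z "\<lambda>z. p u (y,z)", OF fin(3) _ Y0[OF that(1), unfolded pUY_def] that(2)])
           (rule nn[OF that(1) y])
      then show ?thesis using True by simp
    next
      case False
      have "P y * mutual_info U Z (\<lambda>u z. p u (y,z) / P y) = (\<Sum>u\<in>U. \<Sum>z\<in>Z.
        P y * (if p u (y,z) / P y = 0 then 0 else p u (y,z) / P y *
           ln (p u (y,z) / P y / ((\<Sum>z'\<in>Z. p u (y,z') / P y) * (\<Sum>u'\<in>U. p u' (y,z) / P y)))))"
        unfolding mutual_info_def by (simp only: sum_distrib_left)
      also have "\<dots> = (\<Sum>u\<in>U. \<Sum>z\<in>Z.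
        if p u (y,z) = 0 then 0 else p u (y,z) * ln (p u (y,z) * P y / (pUY u y * pYZ y z)))"
      proof (intro sum.cong refl)
        fix u z assume "u\<in>U" "z\<in>Z"
        have e1: "(\<Sum>z'\<in>Z. p u (y,z') / P y) = pUY u y / P y"
          unfolding pUY_def by (simp add: sum_divide_distrib)
        have e2: "(\<Sum>u'\<in>U. p u' (y,z) / P y) = pYZ y z / P y"
          unfolding pYZ_def by (simp add: sum_divide_distrib)
        have "p u (y,z) / P y / ((pUY u y / P y) * (pYZ y z / P y)) = p u (y,z) * P y / (pUY u y * pYZ y z)"
          using False by (simp add: field_simps)
        then show "P y * (if p u (y,z) / P y = 0 then 0 else p u (y,z) / P y *
           ln (p u (y,z) / P y / ((\<Sum>z'\<in>Z. p u (y,z') / P y) * (\<Sum>u'\<in>U. p u' (y,z) / P y)))) =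
           (if p u (y,z) = 0 then 0 else p u (y,z) * ln (p u (y,z) * P y / (pUY u y * pYZ y z)))"
          using False unfolding e1 e2 by simp
      qed
      finally show ?thesis .
    qed
  qed
  have pt: "(if p u (y,z) = 0 then 0 else p u (y,z) * ln (p u (y,z) / (pU u * pYZ y z))) =
     (if p u (y,z) = 0 then 0 else p u (y,z) * ln (pUY u y / (pU u * P y))) +
     (if p u (y,z) = 0 then 0 else p u (y,z) * ln (p u (y,z) * P y / (pUY u y * pYZ y z)))"
    if "u\<in>U" "y\<in>Y" "z\<in>Z" for u y z
  proof (cases "p u (y,z) = 0")
    case False
    with nn[OF that] have pp: "p u (y,z) > 0" by simp
    with pos[OF that] have q: "pUY u y > 0" "pU u > 0" "P y > 0" "pYZ y z > 0" by auto
    have "ln (p u (y,z) / (pU u * pYZ y z)) = ln (pUY u y / (pU u * P y)) + ln (p u (y,z) * P y / (pUY u y * pYZ y z))"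
      using pp q by (simp add: ln_div ln_mult)
    then show ?thesis using False by (simp add: distrib_left)
  qed simp
  have "mutual_info U (Y \<times> Z) p = mutual_info U Y pUY + (\<Sum>u\<in>U. \<Sum>y\<in>Y. \<Sum>z\<in>Z.
      if p u (y,z) = 0 then 0 else p u (y,z) * ln (p u (y,z) * P y / (pUY u y * pYZ y z)))"
    unfolding L R1 sum.distrib[symmetric] by (intro sum.cong refl) (rule pt)
  also have "(\<Sum>u\<in>U. \<Sum>y\<in>Y. \<Sum>z\<in>Z.
      if p u (y,z) = 0 then 0 else p u (y,z) * ln (p u (y,z) * P y / (pUY u y * pYZ y z)))
     = (\<Sum>y\<in>Y. P y * mutual_info U Z (\<lambda>u z. p u (y,z) / P y))"
    unfolding R2 by (rule sum.swap)
  finally have X: "mutual_info U (Y \<times> Z) p = mutual_info U Y pUY +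
    (\<Sum>y\<in>Y. P y * mutual_info U Z (\<lambda>u z. p u (y,z) / P y))" .
  have eq: "pUY = (\<lambda>u y. \<Sum>z\<in>Z. p u (y,z))" by (intro ext) (simp add: pUY_def)
  show ?thesis unfolding P' using X unfolding eq .
qed



lemma mi_reindex:
  assumes "bij_betw \<phi> V' V"
  shows "mutual_info U V p = mutual_info U V' (\<lambda>u v. p u (\<phi> v))"
proof -
  have e: "(\<Sum>v'\<in>V. p u v') = (\<Sum>v\<in>V'. p u (\<phi> v))" for u
    using sum.reindex_bij_betw[OF assms, symmetric] .
  show ?thesis unfolding mutual_info_def
  proof (intro sum.cong refl)
    fix u assume "u \<in> U"
    show "(\<Sum>v\<in>V. if p u v = 0 then 0 else p u v * ln (p u v / ((\<Sum>v'\<in>V. p u v') * (\<Sum>u'\<in>U. p u' v)))) =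
      (\<Sum>v\<in>V'. if p u (\<phi> v) = 0 then 0 else p u (\<phi> v) * ln (p u (\<phi> v) / ((\<Sum>v'\<in>V'. p u (\<phi> v')) * (\<Sum>u'\<in>U. p u' (\<phi> v)))))"
      unfolding e by (rule sum.reindex_bij_betw[OF assms, symmetric])
  qed
qed

lemma weighted_nonneg:
  assumes "finite U" "finite Z" "\<And>u z. u\<in>U \<Longrightarrow> z\<in>Z \<Longrightarrow> 0 \<le> q u z"
  shows "0 \<le> (\<Sum>u\<in>U. \<Sum>z\<in>Z. q u z) * mutual_info U Z (\<lambda>u z. q u z / (\<Sum>u\<in>U. \<Sum>z\<in>Z. q u z))"
proof -
  define S where "S = (\<Sum>u\<in>U. \<Sum>z\<in>Z. q u z)"
  have S0: "0 \<le> S" unfolding S_def using assms by (intro sum_nonneg) auto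
  show ?thesis
  proof (cases "S = 0")
    case False
    have "(\<Sum>u\<in>U. \<Sum>z\<in>Z. q u z / S) = 1"
      using False by (simp add: sum_divide_distrib[symmetric] S_def)
    then have "0 \<le> mutual_info U Z (\<lambda>u z. q u z / S)"
      using assms S0 by (intro mi_nonneg) auto
    then show ?thesis using S0 unfolding S_def[symmetric] by simp
  qed (simp add: S_def)
qed

lemma mi_markov:
  assumes fin: "finite U" "finite A" "finite W"
    and G1: "\<And>w. w \<in> W \<Longrightarrow> (\<Sum>a\<in>A. G w a) = 1"
    and G0: "\<And>w a. w \<in> W \<Longrightarrow> a \<in> A \<Longrightarrow> 0 \<le> G w a"
    and p0: "\<And>u w. u \<in> U \<Longrightarrow> w \<in> W \<Longrightarrow> 0 \<le> p u w"
  shows "mutual_info U (A \<times> W) (\<lambda>u (a,w). p u w * G w a) = mutual_info U W p"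
proof -
  define pU where "pU u = (\<Sum>w\<in>W. p u w)" for u
  define pW where "pW w = (\<Sum>u\<in>U. p u w)" for w
  have m1: "(\<Sum>a\<in>A. \<Sum>w\<in>W. p u w * G w a) = pU u" for u
    unfolding pU_def by (subst sum.swap) (simp add: sum_distrib_left[symmetric] G1)
  have m2: "(\<Sum>u'\<in>U. p u' w * G w a) = pW w * G w a" for w a
    unfolding pW_def by (simp add: sum_distrib_right)
  have "mutual_info U (A \<times> W) (\<lambda>u (a,w). p u w * G w a) = (\<Sum>u\<in>U. \<Sum>a\<in>A. \<Sum>w\<in>W.
      if p u w * G w a = 0 then 0 else p u w * G w a * ln (p u w * G w a / (pU u * (pW w * G w a))))"
    unfolding mutual_info_def sum_pair by (simp only: m1 m2 prod.case)
  also have "\<dots> = (\<Sum>u\<in>U. \<Sum>a\<in>A. \<Sum>w\<in>W. G w a *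
      (if p u w = 0 then 0 else p u w * ln (p u w / (pU u * pW w))))"
  proof (intro sum.cong refl)
    fix u a w assume "u\<in>U" "a\<in>A" "w\<in>W"
    show "(if p u w * G w a = 0 then 0 else p u w * G w a * ln (p u w * G w a / (pU u * (pW w * G w a)))) =
      G w a * (if p u w = 0 then 0 else p u w * ln (p u w / (pU u * pW w)))"
    proof (cases "G w a = 0")
      case False
      have "p u w * G w a / (pU u * (pW w * G w a)) = p u w / (pU u * pW w)"
        using False by (simp add: field_simps)
      then show ?thesis using False by auto
    qed simp
  qed
  also have "\<dots> = (\<Sum>u\<in>U. \<Sum>w\<in>W. (if p u w = 0 then 0 else p u w * ln (p u w / (pU u * pW w))))"
    by (intro sum.cong refl) (subst sum.swap, simp add: sum_distrib_right[symmetric] G1)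
  also have "\<dots> = mutual_info U W p" unfolding mutual_info_def pU_def pW_def ..
  finally show ?thesis .
qed

lemma mi_dp:
  assumes fin: "finite U" "finite X" "finite W"
    and gX: "\<And>w. w \<in> W \<Longrightarrow> g w \<in> X"
    and p0: "\<And>u w. u \<in> U \<Longrightarrow> w \<in> W \<Longrightarrow> 0 \<le> p u w"
  shows "mutual_info U X (\<lambda>u x. \<Sum>w\<in>W. if g w = x then p u w else 0) \<le> mutual_info U W p"
proof -
  define G where "G w x = (if g w = x then 1 else (0::real))" for w x
  define T where "T = (\<lambda>u (x,w). p u w * G w x)"
  have G1: "(\<Sum>x\<in>X. G w x) = 1" if "w \<in> W" for w
    unfolding G_def using gX[OF that] fin by (simp add: sum.delta')
  have T0: "0 \<le> T u (x,w)" if "u\<in>U" "w\<in>W" for u x w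
    unfolding T_def G_def using p0[OF that] by simp
  have "mutual_info U (X \<times> W) T = mutual_info U W p"
    unfolding T_def by (rule mi_markov) (use fin G1 p0 in \<open>auto simp: G_def\<close>)
  moreover have "mutual_info U (X \<times> W) T = mutual_info U X (\<lambda>u x. \<Sum>w\<in>W. T u (x,w))
    + (\<Sum>x\<in>X. (\<Sum>u\<in>U. \<Sum>w\<in>W. T u (x,w)) *
         mutual_info U W (\<lambda>u w. T u (x,w) / (\<Sum>u\<in>U. \<Sum>w\<in>W. T u (x,w))))"
    by (rule mi_chain) (use fin T0 in auto)
  moreover have "0 \<le> (\<Sum>x\<in>X. (\<Sum>u\<in>U. \<Sum>w\<in>W. T u (x,w)) *
         mutual_info U W (\<lambda>u w. T u (x,w) / (\<Sum>u\<in>U. \<Sum>w\<in>W. T u (x,w))))"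
    by (intro sum_nonneg weighted_nonneg) (use fin T0 in auto)
  moreover have "(\<lambda>u x. \<Sum>w\<in>W. T u (x,w)) = (\<lambda>u x. \<Sum>w\<in>W. if g w = x then p u w else 0)"
    unfolding T_def G_def by (auto intro!: ext sum.cong)
  ultimately show ?thesis by simp
qed



lemma mi_one_U:
  assumes "(\<Sum>v\<in>V. q 0 v) = (1::real)"
  shows "mutual_info {..<Suc 0} V q = 0"
proof -
  have e: "\<And>v. (\<Sum>u'<Suc 0. q u' v) = q 0 v" by simp
  have a: "sum (q 0) V = 1" using assms by simp
  have z: "{..<Suc 0} = {0::nat}" by auto
  have s0: "\<And>F. (\<Sum>u\<in>{0::nat}. F u) = (F 0 :: real)" by simp
  show ?thesis unfolding mutual_info_def e z
    unfolding s0 a by (intro sum.neutral ballI) simp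
qed

lemma mi_one_V:
  assumes "(\<Sum>u\<in>U. q u v) = (1::real)"
  shows "mutual_info U {v} q = 0"
  unfolding mutual_info_def by (intro sum.neutral ballI) (simp add: assms)

lemma chanD:
  assumes "channel UNIV UNIV K"
  shows "0 \<le> K a b" "(\<Sum>b\<in>UNIV. K a b) = 1"
  using assms unfolding channel_def by auto

lemma fi_bdd:
  fixes K :: "'x::finite \<Rightarrow> 'y::finite \<Rightarrow> real"
  assumes "channel UNIV UNIV K"
  shows "bdd_above {mutual_info {..<N} UNIV (\<lambda>u b. \<Sum>a\<in>UNIV. p u a * K a b) | (N::nat) p.
      (\<forall>u a. 0 \<le> p u a) \<and> (\<Sum>u<N. \<Sum>a\<in>UNIV. p u a) = 1 \<and> mutual_info {..<N} UNIV p \<le> t}"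
proof (rule bdd_aboveI[where M = "real (card (UNIV :: 'y set))"])
  fix x assume "x \<in> {mutual_info {..<N} UNIV (\<lambda>u b. \<Sum>a\<in>UNIV. p u a * K a b) | (N::nat) p.
      (\<forall>u a. 0 \<le> p u a) \<and> (\<Sum>u<N. \<Sum>a\<in>UNIV. p u a) = 1 \<and> mutual_info {..<N} UNIV p \<le> t}"
  then obtain N :: nat and p where x: "x = mutual_info {..<N} UNIV (\<lambda>u b. \<Sum>a\<in>UNIV. p u a * K a b)"
    and p0: "\<forall>u a. 0 \<le> p u a" by blast
  show "x \<le> real (card (UNIV :: 'y set))" unfolding x
    by (rule mi_le_card) (use p0 chanD[OF assms] in \<open>auto intro!: sum_nonneg\<close>)
qed

lemma fi_upper:
  fixes K :: "'x::finite \<Rightarrow> 'y::finite \<Rightarrow> real" and N :: nat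
  assumes "channel UNIV UNIV K" "\<forall>u a. 0 \<le> p u a" "(\<Sum>u<N. \<Sum>a\<in>UNIV. p u a) = 1"
    "mutual_info {..<N} UNIV p \<le> t"
  shows "mutual_info {..<N} UNIV (\<lambda>u b. \<Sum>a\<in>UNIV. p u a * K a b) \<le> F_I UNIV UNIV K t"
  unfolding F_I_def by (rule cSup_upper[OF _ fi_bdd[OF assms(1)]]) (use assms in auto)

lemma fi_nonneg:
  fixes K :: "'x::finite \<Rightarrow> 'y::finite \<Rightarrow> real"
  assumes "channel UNIV UNIV K" "0 \<le> t"
  shows "0 \<le> F_I UNIV UNIV K t"
proof -
  define p where "p u a = (if u = 0 \<and> a = undefined then 1 else (0::real))" for u :: nat and a :: 'x
  have p0: "\<forall>u a. 0 \<le> p u a" by (simp add: p_def)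
  have p1: "(\<Sum>u<Suc 0. \<Sum>a\<in>UNIV. p u a) = 1" by (simp add: p_def)
  have "mutual_info {..<Suc 0} UNIV p = 0" by (rule mi_one_U) (simp add: p_def)
  then have pt: "mutual_info {..<Suc 0} UNIV p \<le> t" using assms by simp
  have "0 \<le> mutual_info {..<Suc 0} UNIV (\<lambda>u b. \<Sum>a\<in>UNIV. p u a * K a b)"
  proof (rule mi_nonneg)
    show "(\<Sum>u\<in>{..<Suc 0}. \<Sum>b\<in>UNIV. \<Sum>a\<in>UNIV. p u a * K a b) = 1"
    proof -
      have m: "\<And>P x. (if P then 1 else 0) * x = (if P then x else (0::real))" by simp
      have "\<And>b. (\<Sum>a\<in>UNIV. p 0 a * K a b) = K undefined b"
        unfolding p_def by (simp only: m simp_thms) (simp add: sum.delta')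
      then show ?thesis using chanD[OF assms(1)] by simp
    qed
  qed (use p0 chanD[OF assms(1)] in \<open>auto intro!: sum_nonneg\<close>)
  also have "\<dots> \<le> F_I UNIV UNIV K t" by (rule fi_upper[OF assms(1) p0 p1 pt])
  finally show ?thesis .
qed

lemma psi0:
  fixes K :: "'x::finite \<Rightarrow> 'y::finite \<Rightarrow> real" and \<psi> :: "real \<Rightarrow> real"
  assumes "channel UNIV UNIV K" "\<forall>t\<ge>0. \<psi> t \<ge> (0::real)" "\<forall>t\<ge>0. F_I UNIV UNIV K t \<le> t - \<psi> t"
  shows "\<psi> 0 = 0"
  using fi_nonneg[OF assms(1), of 0] assms(2,3) by force

lemma psi_mono:
  fixes \<psi> :: "real \<Rightarrow> real"
  assumes cvx: "convex_on {0..} \<psi>" and nn: "\<forall>t\<ge>0. \<psi> t \<ge> (0::real)" and z: "\<psi> 0 = 0"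
    and ab: "0 \<le> a" "a \<le> b"
  shows "\<psi> a \<le> \<psi> b"
proof (cases "b = 0")
  case True then have "a = b" using ab by simp then show ?thesis by simp
next
  case False
  then have b: "b > 0" using ab by simp
  have "\<psi> ((1 - a/b) *\<^sub>R 0 + (a/b) *\<^sub>R b) \<le> (1 - a/b) * \<psi> 0 + (a/b) * \<psi> b"
    by (rule convex_onD[OF cvx]) (use ab b in auto)
  moreover have "(1 - a/b) *\<^sub>R 0 + (a/b) *\<^sub>R b = a" using b by simp
  moreover have "(a/b) * \<psi> b \<le> \<psi> b"
    using ab b nn by (intro mult_left_le_one_le) auto
  ultimately show ?thesis using z by simp
qed

lemma h_mono:
  assumes cvx: "convex_on {0..} \<psi>" and hn: "\<And>s. 0 \<le> s \<Longrightarrow> 0 \<le> s - \<psi> s"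
    and ab: "0 \<le> a" "a \<le> (b::real)"
  shows "a - \<psi> a \<le> b - \<psi> b"
proof (rule ccontr)
  assume "\<not> ?thesis"
  then have lt: "b - \<psi> b < a - \<psi> a" by simp
  define ha where "ha = a - \<psi> a"
  define hb where "hb = b - \<psi> b"
  have hb0: "0 \<le> hb" unfolding hb_def using hn ab by simp
  have ha0: "0 < ha" using lt hb0 unfolding ha_def hb_def by simp
  have ablt: "a < b" using lt ab by (cases "a = b") auto
  define l where "l = (hb / ha + 1) / 2"
  have l0: "0 < l" "l < 1" using hb0 ha0 lt unfolding l_def ha_def[symmetric] hb_def[symmetric]
    by (auto simp: field_simps)
  have lhb: "hb < l * ha" using hb0 ha0 lt unfolding l_def ha_def[symmetric] hb_def[symmetric]
    by (auto simp: field_simps)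
  define c where "c = (b - l * a) / (1 - l)"
  have bc: "b \<le> c" unfolding c_def using l0 ab by (simp add: field_simps)
  have bcomb: "(1 - (1 - l)) *\<^sub>R a + (1 - l) *\<^sub>R c = b" unfolding c_def using l0 by simp
  have "\<psi> ((1 - (1 - l)) *\<^sub>R a + (1 - l) *\<^sub>R c) \<le> (1 - (1 - l)) * \<psi> a + (1 - l) * \<psi> c"
    by (rule convex_onD[OF cvx]) (use l0 ab bc in auto)
  then have "\<psi> b \<le> l * \<psi> a + (1 - l) * \<psi> c" using bcomb by simp
  moreover have "0 \<le> c - \<psi> c" using hn ab bc by simp
  moreover have "b = l * a + (1 - l) * c" using bcomb by simp
  ultimately have "l * ha \<le> hb" unfolding ha_def hb_def using l0
  proof -
    assume A: "\<psi> b \<le> l * \<psi> a + (1 - l) * \<psi> c" "0 \<le> c - \<psi> c" "b = l * a + (1 - l) * c"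
    have "0 \<le> (1 - l) * (c - \<psi> c)" using A(2) l0 by simp
    then have "0 \<le> (1 - l) * c - (1 - l) * \<psi> c" by (simp add: right_diff_distrib)
    then show "l * (a - \<psi> a) \<le> b - \<psi> b" using A(1,3) by (simp add: right_diff_distrib)
  qed
  then show False using lhb by simp
qed



lemma step:
  fixes p :: "nat \<Rightarrow> 'w::finite \<Rightarrow> real" and G :: "'w \<Rightarrow> 'l \<Rightarrow> real"
    and K :: "'x::finite \<Rightarrow> 'y::finite \<Rightarrow> real" and g :: "'w \<Rightarrow> 'l \<Rightarrow> 'x"
    and \<psi> :: "real \<Rightarrow> real" and N :: nat
  assumes Yf: "finite Y"
    and chan: "channel UNIV UNIV K"
    and G0: "\<And>w y. y\<in>Y \<Longrightarrow> 0 \<le> G w y" and G1: "\<And>w. (\<Sum>y\<in>Y. G w y) = 1"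
    and p0: "\<And>u w. 0 \<le> p u w" and p1: "(\<Sum>u<N. \<Sum>w\<in>UNIV. p u w) = 1"
    and pt: "mutual_info {..<N} UNIV p \<le> t"
    and cvx: "convex_on {0..} \<psi>"
    and FI: "\<And>s. 0 \<le> s \<Longrightarrow> F_I UNIV UNIV K s \<le> s - \<psi> s"
    and hmono: "\<And>a b. 0 \<le> a \<Longrightarrow> a \<le> b \<Longrightarrow> a - \<psi> a \<le> b - \<psi> b"
  shows "mutual_info {..<N} (Y \<times> UNIV) (\<lambda>u (y,z). \<Sum>w\<in>UNIV. p u w * G w y * K (g w y) z)
     \<le> t - \<psi> (t - mutual_info {..<N} Y (\<lambda>u y. \<Sum>w\<in>UNIV. p u w * G w y))"
proof -
  define U where "U = {..<N}"
  have Uf: "finite U" by (simp add: U_def)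
  define Q where "Q u y = (\<Sum>w\<in>UNIV. p u w * G w y)" for u y
  define r where "r = mutual_info U Y Q"
  define R where "R = (\<lambda>u (y,z). \<Sum>w\<in>UNIV. p u w * G w y * K (g w y) z)"
  define P where "P y = (\<Sum>u\<in>U. \<Sum>w\<in>UNIV. p u w * G w y)" for y
  note K0 = chanD(1)[OF chan] and K1 = chanD(2)[OF chan]
  have R0: "0 \<le> R u (y,z)" if "y \<in> Y" for u y z
    unfolding R_def using p0 G0[OF that] K0 by (auto intro!: sum_nonneg)
  have sumR: "(\<Sum>z\<in>UNIV. R u (y,z)) = Q u y" for u y
  proof -
    have "(\<Sum>z\<in>UNIV. R u (y,z)) = (\<Sum>w\<in>UNIV. p u w * G w y * (\<Sum>z\<in>UNIV. K (g w y) z))"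
      unfolding R_def by (simp add: sum_distrib_left) (rule sum.swap)
    then show ?thesis by (simp add: K1 Q_def)
  qed
  have PR: "(\<Sum>u\<in>U. \<Sum>z\<in>UNIV. R u (y,z)) = P y" for y
    by (simp add: sumR P_def Q_def)
  have P0: "0 \<le> P y" if "y \<in> Y" for y
    unfolding P_def using p0 G0[OF that] by (auto intro!: sum_nonneg)
  have P1: "(\<Sum>y\<in>Y. P y) = 1"
  proof -
    have "(\<Sum>y\<in>Y. P y) = (\<Sum>u\<in>U. \<Sum>y\<in>Y. \<Sum>w\<in>UNIV. p u w * G w y)"
      unfolding P_def by (rule sum.swap)
    also have "\<dots> = (\<Sum>u\<in>U. \<Sum>w\<in>UNIV. \<Sum>y\<in>Y. p u w * G w y)"
      by (intro sum.cong refl) (rule sum.swap)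
    also have "\<dots> = (\<Sum>u\<in>U. \<Sum>w\<in>UNIV. p u w * (\<Sum>y\<in>Y. G w y))"
      by (simp add: sum_distrib_left)
    finally have "(\<Sum>y\<in>Y. P y) = (\<Sum>u\<in>U. \<Sum>w\<in>UNIV. p u w * (\<Sum>y\<in>Y. G w y))" .
    then show ?thesis using p1 by (simp add: G1 U_def)
  qed
  have Yne: "Y \<noteq> {}" using G1[of undefined] by auto
  have chain1: "mutual_info U (Y \<times> UNIV) R = r + (\<Sum>y\<in>Y. P y * mutual_info U UNIV (\<lambda>u z. R u (y,z) / P y))"
  proof -
    have "mutual_info U (Y \<times> UNIV) R = mutual_info U Y (\<lambda>u y. \<Sum>z\<in>UNIV. R u (y,z))
      + (\<Sum>y\<in>Y. (\<Sum>u\<in>U. \<Sum>z\<in>UNIV. R u (y,z)) *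
         mutual_info U UNIV (\<lambda>u z. R u (y,z) / (\<Sum>u\<in>U. \<Sum>z\<in>UNIV. R u (y,z))))"
      by (rule mi_chain) (use Uf Yf R0 in auto)
    moreover have "(\<lambda>u y. \<Sum>z\<in>UNIV. R u (y,z)) = Q" by (intro ext) (rule sumR)
    ultimately show ?thesis unfolding PR r_def by simp
  qed
  define S where "S y u x = (\<Sum>w\<in>UNIV. if g w y = x then p u w * G w y / P y else 0)" for y u x
  define s where "s y = mutual_info U UNIV (S y)" for y
  define Qy where "Qy y u w = p u w * G w y / P y" for y u w
  have dp: "s y \<le> mutual_info U UNIV (Qy y)" if "y \<in> Y" for y
  proof -
    have "mutual_info U UNIV (\<lambda>u x. \<Sum>w\<in>UNIV. if g w y = x then Qy y u w else 0) \<le> mutual_info U UNIV (Qy y)"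
      by (rule mi_dp) (use Uf p0 G0[OF that] P0[OF that] in \<open>auto simp: Qy_def\<close>)
    then show ?thesis unfolding s_def S_def Qy_def .
  qed
  have sumS: "(\<Sum>x\<in>UNIV. S y u x) = (\<Sum>w\<in>UNIV. p u w * G w y / P y)" for y u
    unfolding S_def by (subst sum.swap) (simp add: sum.delta)
  have s0: "0 \<le> s y" if "y \<in> Y" for y
  proof (cases "P y = 0")
    case True
    then have "S y = (\<lambda>u x. 0)" unfolding S_def True by (simp add: fun_eq_iff cong: if_cong)
    then show ?thesis by (simp add: s_def mutual_info_def)
  next
    case False
    have "(\<Sum>u\<in>U. \<Sum>x\<in>UNIV. S y u x) = 1"
      unfolding sumS using False
      by (simp add: sum_divide_distrib[symmetric] P_def)
    then show ?thesis unfolding s_def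
      by (intro mi_nonneg) (use Uf p0 G0[OF that] P0[OF that] in \<open>auto simp: S_def intro!: sum_nonneg\<close>)
  qed
  have per: "P y * mutual_info U UNIV (\<lambda>u z. R u (y,z) / P y) \<le> P y * (s y - \<psi> (s y))" if y: "y \<in> Y" for y
  proof (cases "P y = 0")
    case True then show ?thesis by simp
  next
    case False
    then have Ppos: "P y > 0" using P0[OF y] by simp
    have eqR: "(\<lambda>u z. R u (y,z) / P y) = (\<lambda>u b. \<Sum>a\<in>UNIV. S y u a * K a b)"
    proof (intro ext)
      fix u b
      have "(\<Sum>a\<in>UNIV. S y u a * K a b) = (\<Sum>w\<in>UNIV. \<Sum>a\<in>UNIV. if g w y = a then p u w * G w y / P y * K a b else 0)"
      proof -
        have mif: "\<And>c x y. (if c then x else 0) * y = (if c then x * y else (0::real))" by simp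
        show ?thesis unfolding S_def sum_distrib_right mif by (rule sum.swap)
      qed
      also have "\<dots> = (\<Sum>w\<in>UNIV. p u w * G w y / P y * K (g w y) b)"
        by (simp add: sum.delta)
      also have "\<dots> = R u (y,b) / P y"
        unfolding R_def by (simp add: sum_divide_distrib)
      finally show "R u (y,b) / P y = (\<Sum>a\<in>UNIV. S y u a * K a b)" by simp
    qed
    have S0: "\<forall>u a. 0 \<le> S y u a"
      using p0 G0[OF y] P0[OF y] by (auto simp: S_def intro!: sum_nonneg)
    have S1: "(\<Sum>u<N. \<Sum>a\<in>UNIV. S y u a) = 1"
      unfolding sumS using False
      by (simp add: sum_divide_distrib[symmetric] P_def U_def)
    have "mutual_info U UNIV (\<lambda>u z. R u (y,z) / P y) \<le> F_I UNIV UNIV K (s y)"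
      unfolding eqR U_def by (rule fi_upper[OF chan S0 S1]) (simp add: s_def U_def)
    also have "\<dots> \<le> s y - \<psi> (s y)" by (rule FI[OF s0[OF y]])
    finally show ?thesis using Ppos by simp
  qed
  have markov: "mutual_info U UNIV p = r + (\<Sum>y\<in>Y. P y * mutual_info U UNIV (Qy y))"
  proof -
    have "mutual_info U (Y \<times> UNIV) (\<lambda>u (y,w). p u w * G w y) = mutual_info U UNIV p"
      by (rule mi_markov) (use Uf Yf G0 G1 p0 in auto)
    moreover have "mutual_info U (Y \<times> UNIV) (\<lambda>u (y,w). p u w * G w y) =
      mutual_info U Y (\<lambda>u y. \<Sum>w\<in>UNIV. (\<lambda>u (y,w). p u w * G w y) u (y,w))
      + (\<Sum>y\<in>Y. (\<Sum>u\<in>U. \<Sum>w\<in>UNIV. (\<lambda>u (y,w). p u w * G w y) u (y,w)) *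
         mutual_info U UNIV (\<lambda>u w. (\<lambda>u (y,w). p u w * G w y) u (y,w) /
            (\<Sum>u\<in>U. \<Sum>w\<in>UNIV. (\<lambda>u (y,w). p u w * G w y) u (y,w))))"
      by (rule mi_chain) (use Uf Yf G0 p0 in auto)
    moreover have "(\<lambda>u y. \<Sum>w\<in>UNIV. p u w * G w y) = Q" by (intro ext) (simp add: Q_def)
    moreover have "\<And>y. Qy y = (\<lambda>u w. p u w * G w y / P y)" by (intro ext) (simp add: Qy_def)
    ultimately show ?thesis by (simp add: r_def P_def[symmetric])
  qed
  define sb where "sb = (\<Sum>y\<in>Y. P y * s y)"
  have sb0: "0 \<le> sb" unfolding sb_def using P0 s0 by (auto intro!: sum_nonneg)
  have sbt: "sb \<le> t - r"
  proof -
    have "sb \<le> (\<Sum>y\<in>Y. P y * mutual_info U UNIV (Qy y))"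
      unfolding sb_def using P0 dp by (intro sum_mono mult_left_mono) auto
    also have "\<dots> = mutual_info U UNIV p - r" using markov by simp
    finally show ?thesis using pt U_def by simp
  qed
  have jensen: "\<psi> sb \<le> (\<Sum>y\<in>Y. P y * \<psi> (s y))"
    unfolding sb_def using convex_on_sum[OF Yf Yne cvx P1, of s] P0 s0 by simp
  have "mutual_info U (Y \<times> UNIV) R \<le> r + (\<Sum>y\<in>Y. P y * (s y - \<psi> (s y)))"
    unfolding chain1 using per by (intro add_left_mono sum_mono) auto
  also have "(\<Sum>y\<in>Y. P y * (s y - \<psi> (s y))) = sb - (\<Sum>y\<in>Y. P y * \<psi> (s y))"
    unfolding sb_def by (simp add: right_diff_distrib sum_subtractf)
  also have "\<dots> \<le> sb - \<psi> sb" using jensen by simp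
  also have "\<dots> \<le> (t - r) - \<psi> (t - r)" by (rule hmono[OF sb0 sbt])
  finally show ?thesis unfolding R_def r_def Q_def U_def by simp
qed



lemma fin_L: "finite {ys :: 'y::finite list. length ys = m}"
  using finite_lists_length_eq[of "UNIV::'y set" m] by simp

lemma bij_snoc: "bij_betw (\<lambda>(y,z). y @ [z]) ({ys::'a list. length ys = m} \<times> UNIV) {ys. length ys = Suc m}"
proof (rule bij_betwI[where g = "\<lambda>ys. (butlast ys, last ys)"])
  show "(\<lambda>(y,z). y @ [z]) \<in> {ys::'a list. length ys = m} \<times> UNIV \<rightarrow> {ys. length ys = Suc m}" by auto
  show "(\<lambda>ys. (butlast ys, last ys)) \<in> {ys::'a list. length ys = Suc m} \<rightarrow> {ys. length ys = m} \<times> UNIV" by auto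
  show "(\<lambda>ys. (butlast ys, last ys)) ((\<lambda>(y,z). y @ [z]) x) = x" for x :: "'a list \<times> 'a" by (cases x) auto
  show "(\<lambda>(y,z). y @ [z]) ((\<lambda>ys. (butlast ys, last ys)) ys) = ys" if "ys \<in> {ys::'a list. length ys = Suc m}" for ys
    using that by (cases ys rule: rev_cases) auto
qed

lemma FB_snoc:
  assumes "length y = m"
  shows "feedback_channel (Suc m) K f w (y @ [z]) = feedback_channel m K f w y * K (f m w y) z"
proof -
  have "(\<Prod>j<m. K (f j w (take j (y @ [z]))) ((y @ [z]) ! j)) = (\<Prod>j<m. K (f j w (take j y)) (y ! j))"
    using assms by (intro prod.cong refl) (simp add: nth_append)
  then show ?thesis unfolding feedback_channel_def using assms by (simp add: nth_append)
qed

lemma FB_nonneg: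
  assumes "channel UNIV UNIV K"
  shows "0 \<le> feedback_channel m K f w ys"
  unfolding feedback_channel_def using chanD(1)[OF assms] by (intro prod_nonneg) auto

lemma FB_sum:
  fixes K :: "'x::finite \<Rightarrow> 'y::finite \<Rightarrow> real"
  assumes "channel UNIV UNIV K"
  shows "(\<Sum>ys\<in>{ys. length ys = m}. feedback_channel m K f w ys) = 1"
proof (induction m)
  case 0
  have "{ys :: 'y list. length ys = 0} = {[]}" by auto
  then show ?case by (simp add: feedback_channel_def)
next
  case (Suc m)
  have "(\<Sum>ys\<in>{ys. length ys = Suc m}. feedback_channel (Suc m) K f w ys)
     = (\<Sum>v\<in>{ys. length ys = m} \<times> UNIV. feedback_channel (Suc m) K f w ((\<lambda>(y,z). y @ [z]) v))"
    by (rule sum.reindex_bij_betw[OF bij_snoc, symmetric])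
  also have "\<dots> = (\<Sum>y\<in>{ys. length ys = m}. \<Sum>z\<in>UNIV. feedback_channel m K f w y * K (f m w y) z)"
    unfolding sum_pair by (intro sum.cong refl) (auto simp: FB_snoc)
  also have "\<dots> = (\<Sum>y\<in>{ys. length ys = m}. feedback_channel m K f w y)"
    by (simp add: sum_distrib_left[symmetric] chanD(2)[OF assms])
  finally show ?case using Suc by simp
qed

lemma funpow_nonneg:
  fixes \<psi> :: "real \<Rightarrow> real"
  assumes "\<forall>t\<ge>0. \<psi> t \<ge> 0" "0 \<le> t"
  shows "0 \<le> (\<psi> ^^ m) t"
  using assms by (induction m) auto

lemma claim:
  fixes K :: "'x::finite \<Rightarrow> 'y::finite \<Rightarrow> real"
    and \<psi> :: "real \<Rightarrow> real"
    and f :: "nat \<Rightarrow> 'w::finite \<Rightarrow> 'y list \<Rightarrow> 'x"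
    and p :: "nat \<Rightarrow> 'w \<Rightarrow> real" and N :: nat
  assumes chan: "channel UNIV UNIV K"
    and cvx: "convex_on {0..} \<psi>"
    and nn: "\<forall>t\<ge>0. \<psi> t \<ge> 0"
    and FIa: "\<forall>t\<ge>0. F_I UNIV UNIV K t \<le> t - \<psi> t"
    and t0: "0 \<le> t"
    and p0: "\<forall>u w. 0 \<le> p u w" and p1: "(\<Sum>u<N. \<Sum>w\<in>UNIV. p u w) = 1"
    and pt: "mutual_info {..<N} UNIV p \<le> t"
  shows "mutual_info {..<N} {ys. length ys = m} (\<lambda>u ys. \<Sum>w\<in>UNIV. p u w * feedback_channel m K f w ys)
     \<le> t - (\<psi> ^^ m) t"
proof (induction m)
  case 0
  have "{ys :: 'y list. length ys = 0} = {[]}" by auto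
  moreover have "mutual_info {..<N} {[]} (\<lambda>u ys. \<Sum>w\<in>UNIV. p u w * feedback_channel 0 K f w ys) = 0"
    by (rule mi_one_V) (simp add: feedback_channel_def p1)
  ultimately show ?case by simp
next
  case (Suc m)
  have FI: "\<And>s. 0 \<le> s \<Longrightarrow> F_I UNIV UNIV K s \<le> s - \<psi> s" using FIa by simp
  have hn: "\<And>s. 0 \<le> s \<Longrightarrow> 0 \<le> s - \<psi> s" using FI fi_nonneg[OF chan] by force
  have hmono: "\<And>a b. 0 \<le> a \<Longrightarrow> a \<le> b \<Longrightarrow> a - \<psi> a \<le> b - \<psi> b"
    by (rule h_mono[OF cvx hn])
  have z: "\<psi> 0 = 0" by (rule psi0[OF chan nn FIa])
  define r where "r = mutual_info {..<N} {ys. length ys = m} (\<lambda>u y. \<Sum>w\<in>UNIV. p u w * feedback_channel m K f w y)"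
  have "mutual_info {..<N} {ys. length ys = Suc m} (\<lambda>u ys. \<Sum>w\<in>UNIV. p u w * feedback_channel (Suc m) K f w ys)
    = mutual_info {..<N} ({ys. length ys = m} \<times> UNIV)
        (\<lambda>u v. (\<lambda>u ys. \<Sum>w\<in>UNIV. p u w * feedback_channel (Suc m) K f w ys) u ((\<lambda>(y,z). y @ [z]) v))"
    by (rule mi_reindex[OF bij_snoc])
  also have "\<dots> = mutual_info {..<N} ({ys. length ys = m} \<times> UNIV)
        (\<lambda>u (y,z). \<Sum>w\<in>UNIV. p u w * feedback_channel m K f w y * K (f m w y) z)"
    by (rule mi_cong) (auto simp: FB_snoc mult.assoc)
  also have "\<dots> \<le> t - \<psi> (t - r)" unfolding r_def
    by (rule step[OF fin_L chan _ FB_sum[OF chan] _ p1 pt cvx FI hmono])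
       (use p0 FB_nonneg[OF chan] in auto)
  also have "\<dots> \<le> t - (\<psi> ^^ Suc m) t"
  proof -
    have "(\<psi> ^^ m) t \<le> t - r" using Suc unfolding r_def by simp
    then have "\<psi> ((\<psi> ^^ m) t) \<le> \<psi> (t - r)"
      by (intro psi_mono[OF cvx nn z] funpow_nonneg[OF nn t0])
    then show ?thesis by simp
  qed
  finally show ?case .
qed



theorem corollary5:
  fixes K :: "'x::finite \<Rightarrow> 'y::finite \<Rightarrow> real"
    and \<psi> :: "real \<Rightarrow> real"
    and f :: "nat \<Rightarrow> 'w::finite \<Rightarrow> 'y list \<Rightarrow> 'x"
    and n :: nat
  assumes "channel UNIV UNIV K"
    and "convex_on {0..} \<psi>"
    and "\<forall>t\<ge>0. \<psi> t \<ge> 0"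
    and "\<forall>t\<ge>0. F_I UNIV UNIV K t \<le> t - \<psi> t"
    and "n \<ge> 1"
  shows "\<forall>t\<ge>0. F_I (UNIV :: 'w set) {ys. length ys = n} (feedback_channel n K f) t
           \<le> t - (\<psi> ^^ n) t"
proof (intro allI impI)
  fix t :: real assume t0: "0 \<le> t"
  show "F_I (UNIV :: 'w set) {ys. length ys = n} (feedback_channel n K f) t \<le> t - (\<psi> ^^ n) t"
    unfolding F_I_def
  proof (rule cSup_least)
    define p where "p u a = (if u = 0 \<and> a = undefined then 1 else (0::real))" for u :: nat and a :: 'w
    have p0: "\<forall>u a. 0 \<le> p u a" by (simp add: p_def)
    have p1: "(\<Sum>u<Suc 0. \<Sum>a\<in>UNIV. p u a) = 1" by (simp add: p_def)
    have "mutual_info {..<Suc 0} UNIV p = 0" by (rule mi_one_U) (simp add: p_def)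
    then have pt: "mutual_info {..<Suc 0} UNIV p \<le> t" using t0 by simp
    show "{mutual_info {..<N} {ys. length ys = n} (\<lambda>u b. \<Sum>a\<in>UNIV. p u a * feedback_channel n K f a b) | (N::nat) p.
      (\<forall>u a. 0 \<le> p u a) \<and> (\<Sum>u<N. \<Sum>a\<in>UNIV. p u a) = 1 \<and> mutual_info {..<N} UNIV p \<le> t} \<noteq> {}"
      using p0 p1 pt by blast
  next
    fix x assume "x \<in> {mutual_info {..<N} {ys. length ys = n} (\<lambda>u b. \<Sum>a\<in>UNIV. p u a * feedback_channel n K f a b) | (N::nat) p.
      (\<forall>u a. 0 \<le> p u a) \<and> (\<Sum>u<N. \<Sum>a\<in>UNIV. p u a) = 1 \<and> mutual_info {..<N} UNIV p \<le> t}"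
    then obtain N :: nat and p :: "nat \<Rightarrow> 'w \<Rightarrow> real" where
      x: "x = mutual_info {..<N} {ys. length ys = n} (\<lambda>u b. \<Sum>a\<in>UNIV. p u a * feedback_channel n K f a b)"
      and p0: "\<forall>u a. 0 \<le> p u a" and p1: "(\<Sum>u<N. \<Sum>a\<in>UNIV. p u a) = 1"
      and pt: "mutual_info {..<N} UNIV p \<le> t" by blast
    show "x \<le> t - (\<psi> ^^ n) t" unfolding x
      by (rule claim[OF assms(1-4) t0 p0 p1 pt])
  qed
qed

end
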